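(* Work in discrete time, $t, \tau \in \{0,1,2,\dots\}$. Let $S(\tau,t)$, for integers $t \ge \tau \ge 0$, be a random process with non-negative real values and $S(t,t) = 0$ for all $t \ge 0$, and write $\mathsf{M}_S(-\theta,\tau,t) = \mathsf{E}[e^{-\theta S(\tau,t)}]$ for $\theta \ge 0$. Let $\varepsilon \in (0,1]$, $\rho \in (0,1/\varepsilon]$, and for each pair $t \ge \tau \ge 0$ let $\theta(\tau,t) > 0$ be an arbitrary (deterministic) parameter. Define $$\mathcal{S}^{\varepsilon}(\tau,t) = -\frac{1}{\theta(\tau,t)}\Bigl( \ln \mathsf{M}_S(-\theta(\tau,t),\tau,t) + \rho (t-\tau) - \ln(\rho\varepsilon)\Bigr).$$ Then for every $t \ge 0$, $$\mathsf{P}\bigl[S(\tau,t) \ge \mathcal{S}^{\varepsilon}(\tau,t) \text{ for all } \tau \in \{0,1,\dots,t\}\bigr] \ge 1-\varepsilon .$$ Consequently, if $A(t)$ and $D(t)$ are (cumulative arrival and departure) processes satisfying $D(t) \ge \inf_{\tau \in [0,t]}\{A(\tau) + S(\tau,t)\}$ for all $t \ge 0$, then $\mathsf{P}\bigl[D(t) \ge \inf_{\tau \in [0,t]}\{A(\tau) + \mathcal{S}^{\varepsilon}(\tau,t)\}\bigr] \ge 1-\varepsilon$ for all $t \ge 0$.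
   Context: $S(\tau,t)$ models the (time-variant, possibly non-stationary) service offered by a system in the interval $(\tau,t]$. $A(t)$ denotes the number of bits arriving in $(0,t]$ (non-negative, non-decreasing, $A(0)=0$) and $D(t)$ the cumulative departures. The function $\mathcal{S}^{\varepsilon}$ is called a non-stationary service curve. *)

theory Defs
  imports "HOL-Probability.Probability"
begin

definition mgf_neg :: "'a measure \<Rightarrow> (nat \<Rightarrow> nat \<Rightarrow> 'a \<Rightarrow> real) \<Rightarrow> real \<Rightarrow> nat \<Rightarrow> nat \<Rightarrow> real" where
  "mgf_neg M S \<theta> \<tau> t = prob_space.expectation M (\<lambda>\<omega>. exp (- \<theta> * S \<tau> t \<omega>))"

definition service_curve ::
  "'a measure \<Rightarrow> (nat \<Rightarrow> nat \<Rightarrow> 'a \<Rightarrow> real) \<Rightarrow> (nat \<Rightarrow> nat \<Rightarrow> real) \<Rightarrow> real \<Rightarrow> real \<Rightarrow> nat \<Rightarrow> nat \<Rightarrow> real" where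
  "service_curve M S \<theta> \<rho> \<epsilon> \<tau> t =
     - (1 / \<theta> \<tau> t) * (ln (mgf_neg M S (\<theta> \<tau> t) \<tau> t) + \<rho> * (real t - real \<tau>) - ln (\<rho> * \<epsilon>))"

end

theory Submission
  imports Defs
begin

lemma chernoff_step:
  fixes M :: "'a measure" and X :: "'a \<Rightarrow> real" and th c :: real
  assumes P: "prob_space M" and Xm: "X \<in> borel_measurable M"
    and Xn: "\<And>\<omega>. \<omega> \<in> space M \<Longrightarrow> X \<omega> \<ge> 0" and th: "th > 0"
  shows "prob_space.expectation M (\<lambda>\<omega>. exp (- th * X \<omega>)) > 0"
    and "measure M {\<omega>\<in>space M. X \<omega> < c} \<le> prob_space.expectation M (\<lambda>\<omega>. exp (- th * X \<omega>)) / exp (- th * c)"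
proof -
  interpret prob_space M by (rule P)
  let ?f = "\<lambda>\<omega>. exp (- th * X \<omega>)"
  have fm: "?f \<in> borel_measurable M" using Xm by measurable
  have intg: "integrable M ?f"
  proof (rule integrable_const_bound[where B=1])
    show "AE x in M. norm (?f x) \<le> 1" using Xn th by (auto intro!: AE_I2 simp: mult_nonneg_nonneg)
  qed (use fm in simp)
  have nn: "AE x in M. 0 \<le> ?f x" by simp
  have "integral\<^sup>L M ?f \<noteq> 0"
  proof
    assume "integral\<^sup>L M ?f = 0"
    hence "AE x in M. ?f x = 0" using integral_nonneg_eq_0_iff_AE[OF intg nn] by simp
    hence "AE x in M. False" by simp
    thus False using AE_False by simp
  qed
  moreover have "integral\<^sup>L M ?f \<ge> 0" by (simp add: integral_nonneg_AE)
  ultimately show "expectation ?f > 0" by linarith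
  have sub: "{\<omega>\<in>space M. X \<omega> < c} \<subseteq> {\<omega>\<in>space M. ?f \<omega> \<ge> exp (- th * c)}"
    using th by auto
  have "measure M {\<omega>\<in>space M. X \<omega> < c} \<le> measure M {\<omega>\<in>space M. ?f \<omega> \<ge> exp (- th * c)}"
    by (rule finite_measure_mono[OF sub]) (use fm in measurable)
  also have "\<dots> \<le> integral\<^sup>L M ?f / exp (- th * c)"
    by (rule integral_Markov_inequality_measure[OF intg _ nn]) auto
  finally show "measure M {\<omega>\<in>space M. X \<omega> < c} \<le> expectation ?f / exp (- th * c)" .
qed

lemma geo_bound:
  fixes \<rho> :: real assumes "\<rho> > 0"
  shows "(\<Sum>\<tau><t. exp (- \<rho>) ^ (t - \<tau>)) \<le> 1 / \<rho>"
proof -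
  let ?x = "exp (- \<rho>)"
  have x: "0 < ?x" "?x < 1" using assms by auto
  have "(\<Sum>\<tau><t. ?x ^ (t - \<tau>)) = (\<Sum>i<t. ?x ^ (t - (t - Suc i)))"
    by (rule sum.nat_diff_reindex[symmetric])
  also have "\<dots> = (\<Sum>i<t. ?x * ?x ^ i)" by (intro sum.cong) auto
  also have "\<dots> = ?x * ((1 - ?x ^ t) / (1 - ?x))"
    using x by (simp add: sum_distrib_left[symmetric] sum_gp_strict)
  also have "\<dots> \<le> ?x / (1 - ?x)"
    using x by (simp add: divide_right_mono mult_left_le) 
  also have "\<dots> \<le> 1 / \<rho>"
  proof -
    have "1 + \<rho> \<le> exp \<rho>" by (rule exp_ge_add_one_self)
    hence "\<rho> * ?x \<le> 1 - ?x" using x by (simp add: exp_minus field_simps)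
    thus ?thesis using x assms by (simp add: field_simps)
  qed
  finally show ?thesis .
qed
theorem mainTheorem3:
  fixes M :: "'a measure"
    and S :: "nat \<Rightarrow> nat \<Rightarrow> 'a \<Rightarrow> real"
    and \<theta> :: "nat \<Rightarrow> nat \<Rightarrow> real"
    and \<epsilon> \<rho> :: real
    and A D :: "nat \<Rightarrow> 'a \<Rightarrow> real"
  assumes P: "prob_space M"
    and S_meas: "\<And>\<tau> t. \<tau> \<le> t \<Longrightarrow> S \<tau> t \<in> borel_measurable M"
    and S_nonneg: "\<And>\<tau> t \<omega>. \<tau> \<le> t \<Longrightarrow> \<omega> \<in> space M \<Longrightarrow> S \<tau> t \<omega> \<ge> 0"
    and S_diag: "\<And>t \<omega>. \<omega> \<in> space M \<Longrightarrow> S t t \<omega> = 0"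
    and eps: "0 < \<epsilon>" "\<epsilon> \<le> 1"
    and rho: "0 < \<rho>" "\<rho> \<le> 1 / \<epsilon>"
    and theta_pos: "\<And>\<tau> t. \<tau> \<le> t \<Longrightarrow> \<theta> \<tau> t > 0"
  shows "(\<forall>t. prob_space.prob M
            {\<omega> \<in> space M. \<forall>\<tau>\<le>t. S \<tau> t \<omega> \<ge> service_curve M S \<theta> \<rho> \<epsilon> \<tau> t} \<ge> 1 - \<epsilon>)
       \<and> ((\<forall>t. A t \<in> borel_measurable M) \<and> (\<forall>t. D t \<in> borel_measurable M)
          \<and> (\<forall>t \<omega>. \<omega> \<in> space M \<longrightarrow> A t \<omega> \<ge> 0)
          \<and> (\<forall>s t \<omega>. \<omega> \<in> space M \<longrightarrow> s \<le> t \<longrightarrow> A s \<omega> \<le> A t \<omega>)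
          \<and> (\<forall>\<omega>. \<omega> \<in> space M \<longrightarrow> A 0 \<omega> = 0)
          \<and> (\<forall>t \<omega>. \<omega> \<in> space M \<longrightarrow> D t \<omega> \<ge> (INF \<tau>\<in>{..t}. A \<tau> \<omega> + S \<tau> t \<omega>))
          \<longrightarrow> (\<forall>t. prob_space.prob M
                {\<omega> \<in> space M. D t \<omega> \<ge> (INF \<tau>\<in>{..t}. A \<tau> \<omega> + service_curve M S \<theta> \<rho> \<epsilon> \<tau> t)}
                \<ge> 1 - \<epsilon>))"
proof -
  interpret prob_space M by (rule P)
  let ?c = "service_curve M S \<theta> \<rho> \<epsilon>"
  let ?x = "exp (- \<rho>)"
  have re: "0 < \<rho> * \<epsilon>" "\<rho> * \<epsilon> \<le> 1" using eps rho by (auto simp: field_simps)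
  have Eeq: "{\<omega> \<in> space M. \<forall>\<tau>\<le>t. S \<tau> t \<omega> \<ge> ?c \<tau> t}
      = space M - (\<Union>\<tau>\<in>{..<t}. {\<omega>\<in>space M. S \<tau> t \<omega> < ?c \<tau> t})" for t
  proof -
    have ctt: "?c t t \<le> 0"
    proof -
      have "mgf_neg M S (\<theta> t t) t t = expectation (\<lambda>\<omega>. 1)"
        unfolding mgf_neg_def by (rule Bochner_Integration.integral_cong) (auto simp: S_diag)
      hence m1: "mgf_neg M S (\<theta> t t) t t = 1" by (simp add: prob_space)
      have "ln (\<rho> * \<epsilon>) \<le> 0" using re by simp
      moreover have "\<theta> t t > 0" using theta_pos by simp
      ultimately show ?thesis unfolding service_curve_def m1
        by (simp add: divide_nonpos_pos)
    qed
    show ?thesis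
    proof (intro set_eqI iffI)
      fix \<omega> assume "\<omega> \<in> {\<omega> \<in> space M. \<forall>\<tau>\<le>t. S \<tau> t \<omega> \<ge> ?c \<tau> t}"
      thus "\<omega> \<in> space M - (\<Union>\<tau>\<in>{..<t}. {\<omega>\<in>space M. S \<tau> t \<omega> < ?c \<tau> t})"
        by (auto simp: not_less)
    next
      fix \<omega> assume a: "\<omega> \<in> space M - (\<Union>\<tau>\<in>{..<t}. {\<omega>\<in>space M. S \<tau> t \<omega> < ?c \<tau> t})"
      hence w: "\<omega> \<in> space M" by auto
      have "S \<tau> t \<omega> \<ge> ?c \<tau> t" if "\<tau> \<le> t" for \<tau>
      proof (cases "\<tau> = t")
        case True thus ?thesis using ctt S_diag[OF w] by simp
      next
        case False hence "\<tau> < t" using that by simp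
        thus ?thesis using a w by (auto simp: not_less)
      qed
      thus "\<omega> \<in> {\<omega> \<in> space M. \<forall>\<tau>\<le>t. S \<tau> t \<omega> \<ge> ?c \<tau> t}" using w by auto
    qed
  qed
  have Bp: "prob {\<omega>\<in>space M. S \<tau> t \<omega> < ?c \<tau> t} \<le> \<rho> * \<epsilon> * ?x ^ (t - \<tau>)"
    if "\<tau> < t" for \<tau> t
  proof -
    have th: "\<theta> \<tau> t > 0" using theta_pos that by simp
    have sm: "S \<tau> t \<in> borel_measurable M" using S_meas that by simp
    have sn: "\<And>\<omega>. \<omega> \<in> space M \<Longrightarrow> S \<tau> t \<omega> \<ge> 0" using S_nonneg that by simp
    have ch1: "expectation (\<lambda>\<omega>. exp (- \<theta> \<tau> t * S \<tau> t \<omega>)) > 0"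
      by (rule chernoff_step(1)[OF P sm sn th])
    have ch2: "prob {\<omega>\<in>space M. S \<tau> t \<omega> < ?c \<tau> t} \<le> expectation (\<lambda>\<omega>. exp (- \<theta> \<tau> t * S \<tau> t \<omega>)) / exp (- \<theta> \<tau> t * ?c \<tau> t)"
      by (rule chernoff_step(2)[OF P sm sn th])
    let ?m = "mgf_neg M S (\<theta> \<tau> t) \<tau> t"
    have mpos: "?m > 0" using ch1 that unfolding mgf_neg_def by simp
    have "- \<theta> \<tau> t * ?c \<tau> t = ln ?m + \<rho> * real (t - \<tau>) - ln (\<rho> * \<epsilon>)"
      unfolding service_curve_def using th that by (simp add: of_nat_diff)
    hence "exp (- \<theta> \<tau> t * ?c \<tau> t) = ?m * exp (\<rho> * real (t - \<tau>)) / (\<rho> * \<epsilon>)"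
      using mpos re by (simp add: exp_diff exp_add)
    hence "?m / exp (- \<theta> \<tau> t * ?c \<tau> t) = \<rho> * \<epsilon> * exp (- (\<rho> * real (t - \<tau>)))"
      using mpos re by (simp add: exp_minus field_simps)
    also have "\<dots> = \<rho> * \<epsilon> * ?x ^ (t - \<tau>)"
      by (simp add: exp_of_nat_mult[symmetric] mult.commute)
    finally show ?thesis using ch2 that unfolding mgf_neg_def by simp
  qed
  have part1: "prob {\<omega> \<in> space M. \<forall>\<tau>\<le>t. S \<tau> t \<omega> \<ge> ?c \<tau> t} \<ge> 1 - \<epsilon>" for t
  proof -
    let ?B = "\<lambda>\<tau>. {\<omega>\<in>space M. S \<tau> t \<omega> < ?c \<tau> t}"
    have Bs: "?B ` {..<t} \<subseteq> sets M"
    proof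
      fix X assume "X \<in> ?B ` {..<t}"
      then obtain \<tau> where "\<tau> < t" "X = ?B \<tau>" by auto
      moreover have "S \<tau> t \<in> borel_measurable M" using S_meas \<open>\<tau> < t\<close> by simp
      moreover have "?B \<tau> \<in> sets M" using calculation(3) by measurable
      ultimately show "X \<in> sets M" by simp
    qed
    have U: "(\<Union>\<tau>\<in>{..<t}. ?B \<tau>) \<in> sets M" using Bs by auto
    have "prob (\<Union>\<tau>\<in>{..<t}. ?B \<tau>) \<le> (\<Sum>\<tau><t. prob (?B \<tau>))"
      by (rule finite_measure_subadditive_finite) (use Bs in auto)
    also have "\<dots> \<le> (\<Sum>\<tau><t. \<rho> * \<epsilon> * ?x ^ (t - \<tau>))"
      by (rule sum_mono) (use Bp in auto)
    also have "\<dots> = \<rho> * \<epsilon> * (\<Sum>\<tau><t. ?x ^ (t - \<tau>))" by (simp add: sum_distrib_left)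
    also have "\<dots> \<le> \<rho> * \<epsilon> * (1 / \<rho>)"
      using geo_bound[OF rho(1), of t] re by (intro mult_left_mono) auto
    also have "\<dots> = \<epsilon>" using rho by simp
    finally have "prob (\<Union>\<tau>\<in>{..<t}. ?B \<tau>) \<le> \<epsilon>" .
    thus ?thesis unfolding Eeq using prob_compl[OF U] by simp
  qed
  show ?thesis
  proof (intro conjI allI impI)
    fix t show "prob {\<omega> \<in> space M. \<forall>\<tau>\<le>t. S \<tau> t \<omega> \<ge> ?c \<tau> t} \<ge> 1 - \<epsilon>" by (rule part1)
  next
    fix t
    assume H: "(\<forall>t. A t \<in> borel_measurable M) \<and> (\<forall>t. D t \<in> borel_measurable M)
          \<and> (\<forall>t \<omega>. \<omega> \<in> space M \<longrightarrow> A t \<omega> \<ge> 0)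
          \<and> (\<forall>s t \<omega>. \<omega> \<in> space M \<longrightarrow> s \<le> t \<longrightarrow> A s \<omega> \<le> A t \<omega>)
          \<and> (\<forall>\<omega>. \<omega> \<in> space M \<longrightarrow> A 0 \<omega> = 0)
          \<and> (\<forall>t \<omega>. \<omega> \<in> space M \<longrightarrow> D t \<omega> \<ge> (INF \<tau>\<in>{..t}. A \<tau> \<omega> + S \<tau> t \<omega>))"
    have Am: "\<And>t. A t \<in> borel_measurable M" and Dm: "D t \<in> borel_measurable M"
      and DS: "\<And>\<omega>. \<omega> \<in> space M \<Longrightarrow> D t \<omega> \<ge> (INF \<tau>\<in>{..t}. A \<tau> \<omega> + S \<tau> t \<omega>)"
      using H by auto
    let ?F = "{\<omega> \<in> space M. D t \<omega> \<ge> (INF \<tau>\<in>{..t}. A \<tau> \<omega> + ?c \<tau> t)}"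
    have gm: "(\<lambda>\<omega>. INF \<tau>\<in>{..t}. A \<tau> \<omega> + ?c \<tau> t) \<in> borel_measurable M"
      by (rule borel_measurable_cINF_real) (use Am in auto)
    have Fs: "?F \<in> sets M" using gm Dm by measurable
    have sub: "{\<omega> \<in> space M. \<forall>\<tau>\<le>t. S \<tau> t \<omega> \<ge> ?c \<tau> t} \<subseteq> ?F"
    proof
      fix \<omega> assume "\<omega> \<in> {\<omega> \<in> space M. \<forall>\<tau>\<le>t. S \<tau> t \<omega> \<ge> ?c \<tau> t}"
      hence w: "\<omega> \<in> space M" and le: "\<And>\<tau>. \<tau> \<le> t \<Longrightarrow> S \<tau> t \<omega> \<ge> ?c \<tau> t" by auto
      have "(INF \<tau>\<in>{..t}. A \<tau> \<omega> + ?c \<tau> t) \<le> (INF \<tau>\<in>{..t}. A \<tau> \<omega> + S \<tau> t \<omega>)"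
      proof (rule cINF_greatest)
        fix \<tau> assume "\<tau> \<in> {..t}"
        hence "(INF \<tau>\<in>{..t}. A \<tau> \<omega> + ?c \<tau> t) \<le> A \<tau> \<omega> + ?c \<tau> t"
          by (intro cINF_lower) auto
        also have "\<dots> \<le> A \<tau> \<omega> + S \<tau> t \<omega>" using le \<open>\<tau> \<in> {..t}\<close> by auto
        finally show "(INF \<tau>\<in>{..t}. A \<tau> \<omega> + ?c \<tau> t) \<le> A \<tau> \<omega> + S \<tau> t \<omega>" .
      qed auto
      thus "\<omega> \<in> ?F" using DS[OF w] w by auto
    qed
    have "1 - \<epsilon> \<le> prob {\<omega> \<in> space M. \<forall>\<tau>\<le>t. S \<tau> t \<omega> \<ge> ?c \<tau> t}" by (rule part1)
    also have "\<dots> \<le> prob ?F" by (rule finite_measure_mono[OF sub Fs])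
    finally show "prob ?F \<ge> 1 - \<epsilon>" .
  qed
qed

end
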